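(* For every positive integer $n$, $$|S_n(123,132,3241)|=|S_n(132,213,2341)|=f_{n+2}-1,$$ where $f_n$ is the $n$-th Fibonacci number ($f_1=f_2=1$, $f_n=f_{n-1}+f_{n-2}$).
   Context: Permutations are written in one-line notation. A permutation $\sigma\in S_n$ contains $\pi\in S_m$ if there are indices $i_1<\dots<i_m$ such that for all $j<l$, $\sigma_{i_j}<\sigma_{i_l}$ iff $\pi_j<\pi_l$; otherwise $\sigma$ avoids $\pi$. $S_n(\pi^{(1)},\dots,\pi^{(r)})$ is the set of permutations in $S_n$ avoiding all the listed patterns. *)

theory Defs
  imports Main "HOL-Number_Theory.Fib"
begin

definition perms :: "nat \<Rightarrow> nat list set" where
  "perms n = {xs. distinct xs \<and> set xs = {1..n}}"

definition contains :: "nat list \<Rightarrow> nat list \<Rightarrow> bool" where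
  "contains sigma pat \<longleftrightarrow>
     (\<exists>idx :: nat \<Rightarrow> nat.
        (\<forall>j l. j < l \<and> l < length pat \<longrightarrow> idx j < idx l) \<and>
        (\<forall>j < length pat. idx j < length sigma) \<and>
        (\<forall>j l. j < l \<and> l < length pat \<longrightarrow>
              (sigma ! idx j < sigma ! idx l \<longleftrightarrow> pat ! j < pat ! l)))"

definition avoids :: "nat list \<Rightarrow> nat list \<Rightarrow> bool" where
  "avoids sigma pat \<longleftrightarrow> \<not> contains sigma pat"

definition Av :: "nat \<Rightarrow> nat list list \<Rightarrow> nat list set" where
  "Av n pats = {sigma \<in> perms n. \<forall>pat \<in> set pats. avoids sigma pat}"

end

theory Submission
  imports Defs
begin

definition C3 :: "nat \<Rightarrow> nat \<Rightarrow> nat \<Rightarrow> nat list \<Rightarrow> bool" where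
"C3 a b c s \<longleftrightarrow> (\<exists>i j k. i<j \<and> j<k \<and> k<length s \<and> (s!i<s!j \<longleftrightarrow> a<b) \<and> (s!i<s!k \<longleftrightarrow> a<c) \<and> (s!j<s!k \<longleftrightarrow> b<c))"

definition C4 :: "nat \<Rightarrow> nat \<Rightarrow> nat \<Rightarrow> nat \<Rightarrow> nat list \<Rightarrow> bool" where
"C4 a b c d s \<longleftrightarrow> (\<exists>i j k l. i<j \<and> j<k \<and> k<l \<and> l<length s \<and> (s!i<s!j \<longleftrightarrow> a<b) \<and> (s!i<s!k \<longleftrightarrow> a<c)
   \<and> (s!i<s!l \<longleftrightarrow> a<d) \<and> (s!j<s!k \<longleftrightarrow> b<c) \<and> (s!j<s!l \<longleftrightarrow> b<d) \<and> (s!k<s!l \<longleftrightarrow> c<d))"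

lemma contains3: "contains s [a,b,c] = C3 a b c s"
  unfolding contains_def C3_def
proof
  assume "\<exists>idx. (\<forall>j l. j < l \<and> l < length [a, b, c] \<longrightarrow> idx j < idx l) \<and>
          (\<forall>j<length [a, b, c]. idx j < length s) \<and>
          (\<forall>j l. j < l \<and> l < length [a, b, c] \<longrightarrow> (s ! idx j < s ! idx l) = ([a, b, c] ! j < [a, b, c] ! l))"
  then obtain idx where h1: "\<forall>j l. j < l \<and> l < length [a,b,c] \<longrightarrow> idx j < idx l"
     and h2: "\<forall>j<length [a,b,c]. idx j < length s"
     and h3: "\<forall>j l. j < l \<and> l < length [a,b,c] \<longrightarrow> (s ! idx j < s ! idx l) = ([a, b, c] ! j < [a, b, c] ! l)"
    by blast
  show "\<exists>i j k. i<j \<and> j<k \<and> k<length s \<and> (s!i<s!j \<longleftrightarrow> a<b) \<and> (s!i<s!k \<longleftrightarrow> a<c) \<and> (s!j<s!k \<longleftrightarrow> b<c)"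
    apply (rule exI[of _ "idx 0"], rule exI[of _ "idx 1"], rule exI[of _ "idx 2"])
    using h1[rule_format, of 0 1] h1[rule_format, of 1 2] h2[rule_format, of 2]
      h3[rule_format, of 0 1] h3[rule_format, of 0 2] h3[rule_format, of 1 2] by simp
next
  assume "\<exists>i j k. i<j \<and> j<k \<and> k<length s \<and> (s!i<s!j \<longleftrightarrow> a<b) \<and> (s!i<s!k \<longleftrightarrow> a<c) \<and> (s!j<s!k \<longleftrightarrow> b<c)"
  then obtain i j k where h: "i<j" "j<k" "k<length s" "(s!i<s!j \<longleftrightarrow> a<b)" "(s!i<s!k \<longleftrightarrow> a<c)" "(s!j<s!k \<longleftrightarrow> b<c)" by blast
  show "\<exists>idx. (\<forall>j l. j < l \<and> l < length [a, b, c] \<longrightarrow> idx j < idx l) \<and>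
          (\<forall>j<length [a, b, c]. idx j < length s) \<and>
          (\<forall>j l. j < l \<and> l < length [a, b, c] \<longrightarrow> (s ! idx j < s ! idx l) = ([a, b, c] ! j < [a, b, c] ! l))"
    apply (rule exI[of _ "\<lambda>t. [i,j,k] ! t"])
    using h by (auto simp: less_Suc_eq numeral_eq_Suc)
qed

lemma contains4: "contains s [a,b,c,d] = C4 a b c d s"
  unfolding contains_def C4_def
proof
  assume "\<exists>idx. (\<forall>j l. j < l \<and> l < length [a, b, c, d] \<longrightarrow> idx j < idx l) \<and>
          (\<forall>j<length [a, b, c, d]. idx j < length s) \<and>
          (\<forall>j l. j < l \<and> l < length [a, b, c, d] \<longrightarrow> (s ! idx j < s ! idx l) = ([a, b, c, d] ! j < [a, b, c, d] ! l))"
  then obtain idx where h1: "\<forall>j l. j < l \<and> l < length [a,b,c,d] \<longrightarrow> idx j < idx l"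
     and h2: "\<forall>j<length [a,b,c,d]. idx j < length s"
     and h3: "\<forall>j l. j < l \<and> l < length [a,b,c,d] \<longrightarrow> (s ! idx j < s ! idx l) = ([a, b, c, d] ! j < [a, b, c, d] ! l)"
    by blast
  show "\<exists>i j k l. i<j \<and> j<k \<and> k<l \<and> l<length s \<and> (s!i<s!j \<longleftrightarrow> a<b) \<and> (s!i<s!k \<longleftrightarrow> a<c)
   \<and> (s!i<s!l \<longleftrightarrow> a<d) \<and> (s!j<s!k \<longleftrightarrow> b<c) \<and> (s!j<s!l \<longleftrightarrow> b<d) \<and> (s!k<s!l \<longleftrightarrow> c<d)"
    apply (rule exI[of _ "idx 0"], rule exI[of _ "idx 1"], rule exI[of _ "idx 2"], rule exI[of _ "idx 3"])
    using h1[rule_format, of 0 1] h1[rule_format, of 1 2] h1[rule_format, of 2 3] h2[rule_format, of 3]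
      h3[rule_format, of 0 1] h3[rule_format, of 0 2] h3[rule_format, of 0 3]
      h3[rule_format, of 1 2] h3[rule_format, of 1 3] h3[rule_format, of 2 3] by simp
next
  assume "\<exists>i j k l. i<j \<and> j<k \<and> k<l \<and> l<length s \<and> (s!i<s!j \<longleftrightarrow> a<b) \<and> (s!i<s!k \<longleftrightarrow> a<c)
   \<and> (s!i<s!l \<longleftrightarrow> a<d) \<and> (s!j<s!k \<longleftrightarrow> b<c) \<and> (s!j<s!l \<longleftrightarrow> b<d) \<and> (s!k<s!l \<longleftrightarrow> c<d)"
  then obtain i j k l where h: "i<j" "j<k" "k<l" "l<length s" "(s!i<s!j \<longleftrightarrow> a<b)" "(s!i<s!k \<longleftrightarrow> a<c)"
   "(s!i<s!l \<longleftrightarrow> a<d)" "(s!j<s!k \<longleftrightarrow> b<c)" "(s!j<s!l \<longleftrightarrow> b<d)" "(s!k<s!l \<longleftrightarrow> c<d)" by blast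
  show "\<exists>idx. (\<forall>j l. j < l \<and> l < length [a, b, c, d] \<longrightarrow> idx j < idx l) \<and>
          (\<forall>j<length [a, b, c, d]. idx j < length s) \<and>
          (\<forall>j l. j < l \<and> l < length [a, b, c, d] \<longrightarrow> (s ! idx j < s ! idx l) = ([a, b, c, d] ! j < [a, b, c, d] ! l))"
    apply (rule exI[of _ "\<lambda>t. [i,j,k,l] ! t"])
    using h by (auto simp: less_Suc_eq numeral_eq_Suc)
qed




lemma C3_tail: assumes "C3 a b c xs" shows "C3 a b c (x#xs)"
proof -
  obtain i j k where h: "i<j" "j<k" "k<length xs" "(xs!i<xs!j \<longleftrightarrow> a<b)" "(xs!i<xs!k \<longleftrightarrow> a<c)" "(xs!j<xs!k \<longleftrightarrow> b<c)"
    using assms unfolding C3_def by blast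
  show ?thesis unfolding C3_def
    by (rule exI[of _ "Suc i"], rule exI[of _ "Suc j"], rule exI[of _ "Suc k"]) (use h in simp)
qed

lemma C4_tail: assumes "C4 a b c d xs" shows "C4 a b c d (x#xs)"
proof -
  obtain i j k l where h: "i<j" "j<k" "k<l" "l<length xs" "(xs!i<xs!j \<longleftrightarrow> a<b)" "(xs!i<xs!k \<longleftrightarrow> a<c)"
   "(xs!i<xs!l \<longleftrightarrow> a<d)" "(xs!j<xs!k \<longleftrightarrow> b<c)" "(xs!j<xs!l \<longleftrightarrow> b<d)" "(xs!k<xs!l \<longleftrightarrow> c<d)"
    using assms unfolding C4_def by blast
  show ?thesis unfolding C4_def
    by (rule exI[of _ "Suc i"], rule exI[of _ "Suc j"], rule exI[of _ "Suc k"], rule exI[of _ "Suc l"]) (use h in simp)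
qed

lemma nth_ge2_lt:
  assumes "2 \<le> k" "k < length (x#u)" "\<forall>z\<in>set (tl u). z < x"
  shows "(x#u)!k < x"
proof -
  have "(x#u)!k = tl u ! (k - 2)"
    using assms(1,2) by (cases u) (auto simp: nth_Cons' numeral_eq_Suc)
  moreover have "k - 2 < length (tl u)" using assms(1,2) by auto
  ultimately show ?thesis using assms(3) by (simp add: nth_mem)
qed

lemma C3_drop:
  assumes "C3 a b c (x#u)" "a<c" "\<forall>z\<in>set (tl u). z<x"
  shows "C3 a b c u"
proof -
  obtain i j k where h: "i<j" "j<k" "k<length (x#u)" "((x#u)!i<(x#u)!j \<longleftrightarrow> a<b)" "((x#u)!i<(x#u)!k \<longleftrightarrow> a<c)" "((x#u)!j<(x#u)!k \<longleftrightarrow> b<c)"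
    using assms(1) unfolding C3_def by blast
  show ?thesis
  proof (cases i)
    case 0
    have "(x#u)!k < x" using nth_ge2_lt[of k x u] h assms(3) by simp
    then show ?thesis using h assms(2) 0 by simp
  next
    case (Suc i')
    obtain j' k' where jk: "j = Suc j'" "k = Suc k'" using h Suc by (metis Suc_lessE)
    show ?thesis unfolding C3_def
      by (rule exI[of _ i'], rule exI[of _ j'], rule exI[of _ k']) (use h Suc jk in simp)
  qed
qed

lemma C4_drop:
  assumes "C4 a b c d (x#u)" "a<c" "\<forall>z\<in>set (tl u). z<x"
  shows "C4 a b c d u"
proof -
  obtain i j k l where h: "i<j" "j<k" "k<l" "l<length (x#u)" "((x#u)!i<(x#u)!j \<longleftrightarrow> a<b)" "((x#u)!i<(x#u)!k \<longleftrightarrow> a<c)"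
   "((x#u)!i<(x#u)!l \<longleftrightarrow> a<d)" "((x#u)!j<(x#u)!k \<longleftrightarrow> b<c)" "((x#u)!j<(x#u)!l \<longleftrightarrow> b<d)" "((x#u)!k<(x#u)!l \<longleftrightarrow> c<d)"
    using assms(1) unfolding C4_def by blast
  show ?thesis
  proof (cases i)
    case 0
    have "(x#u)!k < x" using nth_ge2_lt[of k x u] h assms(3) by simp
    then show ?thesis using h assms(2) 0 by simp
  next
    case (Suc i')
    obtain j' k' l' where jk: "j = Suc j'" "k = Suc k'" "l = Suc l'" using h Suc by (metis Suc_lessE)
    show ?thesis unfolding C4_def
      by (rule exI[of _ i'], rule exI[of _ j'], rule exI[of _ k'], rule exI[of _ l']) (use h Suc jk in simp)
  qed
qed

lemma C3_short: assumes "length s < 3" shows "\<not> C3 a b c s"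
proof
  assume "C3 a b c s"
  then obtain i j k where "i<j" "j<k" "k<length s" unfolding C3_def by blast
  then show False using assms by linarith
qed

lemma C4_short: assumes "length s < 3" shows "\<not> C4 a b c d s"
proof
  assume "C4 a b c d s"
  then obtain i j k l where "i<j" "j<k" "k<l" "l<length s" unfolding C4_def by blast
  then show False using assms by linarith
qed

lemma perms_length: "s \<in> perms n \<Longrightarrow> length s = n"
proof -
  assume "s \<in> perms n"
  then have "distinct s" "set s = {1..n}" unfolding perms_def by auto
  then show "length s = n" using distinct_card[of s] by simp
qed

lemma finite_perms: "finite (perms n)"
proof -
  have "perms n \<subseteq> {xs. set xs \<subseteq> {1..n} \<and> length xs = n}"
  proof
    fix xs assume "xs \<in> perms n"
    then show "xs \<in> {xs. set xs \<subseteq> {1..n} \<and> length xs = n}" using perms_length[of xs n] unfolding perms_def by auto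
  qed
  then show ?thesis using finite_lists_length_eq[of "{1..n}" n] finite_subset by blast
qed

lemma perms_Cons_iff: assumes "n \<ge> 1" shows "(n#t \<in> perms n) = (t \<in> perms (n-1))"
proof
  assume h: "n#t \<in> perms n"
  then have "n \<notin> set t" "distinct t" "insert n (set t) = {1..n}" unfolding perms_def by auto
  then have "set t = {1..n} - {n}" by auto
  also have "\<dots> = {1..n-1}" using assms by auto
  finally show "t \<in> perms (n-1)" using \<open>distinct t\<close> unfolding perms_def by auto
next
  assume h: "t \<in> perms (n-1)"
  then have "distinct t" "set t = {1..n-1}" unfolding perms_def by auto
  moreover have "insert n {1..n-1} = {1..n}" using assms by auto
  ultimately show "n#t \<in> perms n" unfolding perms_def by auto
qed

lemma perms_Cons2_iff: assumes "n \<ge> 2" shows "((n-1)#n#t \<in> perms n) = (t \<in> perms (n-2))"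
proof
  assume h: "(n-1)#n#t \<in> perms n"
  then have "n \<notin> set t" "n-1 \<notin> set t" "distinct t" "insert (n-1) (insert n (set t)) = {1..n}" unfolding perms_def by auto
  then have "set t = {1..n} - {n-1,n}" by auto
  also have "\<dots> = {1..n-2}" using assms by auto
  finally show "t \<in> perms (n-2)" using \<open>distinct t\<close> unfolding perms_def by auto
next
  assume h: "t \<in> perms (n-2)"
  then have "distinct t" "set t = {1..n-2}" unfolding perms_def by auto
  moreover have "insert (n-1) (insert n {1..n-2}) = {1..n}" using assms by auto
  ultimately show "(n-1)#n#t \<in> perms n" using assms unfolding perms_def by auto
qed

lemma perms1: "perms 1 = {[1]}"
proof -
  have "xs = [1]" if "xs \<in> perms 1" for xs
  proof -
    have "length xs = 1" using perms_length that by blast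
    then obtain y where "xs = [y]" by (metis One_nat_def length_0_conv length_Suc_conv)
    then show ?thesis using that unfolding perms_def by auto
  qed
  then show ?thesis unfolding perms_def by auto
qed

lemma perms2: "perms 2 = {[1,2],[2,1]}"
proof -
  have "xs = [1,2] \<or> xs = [2,1]" if "xs \<in> perms 2" for xs
  proof -
    have "length xs = 2" using perms_length that by blast
    then obtain y z where "xs = [y,z]" by (metis length_0_conv length_Suc_conv numeral_2_eq_2)
    have e: "{1..2::nat} = {1,2}" by auto
    have "{y,z} = {1,2}" "y \<noteq> z" using that \<open>xs = [y,z]\<close> e unfolding perms_def by auto
    moreover have "y \<in> {1,2}" "z \<in> {1,2}" using calculation(1) by blast+
    ultimately show ?thesis using \<open>xs = [y,z]\<close> by auto
  qed
  then show ?thesis unfolding perms_def by auto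
qed


lemma set_tl_sub: "z \<in> set (tl xs) \<Longrightarrow> z \<in> set xs"
  by (cases xs) auto

lemma card_decomp:
  fixes n :: nat
  assumes "finite S1" "finite S2" "n \<ge> 1" "hd sp \<noteq> n" "sp \<notin> (\<lambda>t. (n-1)#n#t) ` S2"
  shows "card (Cons n ` S1 \<union> (\<lambda>t. (n-1)#n#t) ` S2 \<union> {sp}) = card S1 + card S2 + 1"
proof -
  have "n - 1 \<noteq> n" using assms(3) by arith
  then have d1: "Cons n ` S1 \<inter> (\<lambda>t. (n-1)#n#t) ` S2 = {}" by auto
  have i1: "card (Cons n ` S1) = card S1" by (rule card_image) (auto simp: inj_on_def)
  have i2: "card ((\<lambda>t. (n-1)#n#t) ` S2) = card S2" by (rule card_image) (auto simp: inj_on_def)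
  have "sp \<notin> Cons n ` S1" using assms(4) by auto
  then have "sp \<notin> Cons n ` S1 \<union> (\<lambda>t. (n-1)#n#t) ` S2" using assms(5) by auto
  then have "card (Cons n ` S1 \<union> (\<lambda>t. (n-1)#n#t) ` S2 \<union> {sp}) = card (Cons n ` S1 \<union> (\<lambda>t. (n-1)#n#t) ` S2) + 1"
    using assms(1,2) by simp
  also have "card (Cons n ` S1 \<union> (\<lambda>t. (n-1)#n#t) ` S2) = card S1 + card S2"
    using card_Un_disjoint[OF _ _ d1] assms(1,2) i1 i2 by simp
  finally show ?thesis .
qed

lemma fib_rec:
  fixes a :: "nat \<Rightarrow> nat"
  assumes "a 1 = 1" "a 2 = 2" "\<And>m. m \<ge> 3 \<Longrightarrow> a m = a (m-1) + a (m-2) + 1"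
  shows "n \<ge> 1 \<Longrightarrow> a n = fib (n+2) - 1"
proof (induction n rule: less_induct)
  case (less n)
  consider "n = 1" | "n = 2" | "n \<ge> 3" using less.prems by arith
  then show ?case
  proof cases
    case 1 then show ?thesis using assms(1) by (simp add: numeral_eq_Suc)
  next
    case 2 then show ?thesis using assms(2) by (simp add: numeral_eq_Suc)
  next
    case 3
    have h1': "a (n-1) = fib (n-1+2) - 1" by (rule less.IH) (use 3 in auto)
    have h2': "a (n-2) = fib (n-2+2) - 1" by (rule less.IH) (use 3 in auto)
    have e1: "n-1+2 = n+1" "n-2+2 = n" using 3 by auto
    have h1: "a (n-1) = fib (n+1) - 1" using h1'[unfolded e1(1)] .
    have h2: "a (n-2) = fib n - 1" using h2'[unfolded e1(2)] .
    have p1: "fib (n+1) \<ge> 1" "fib n \<ge> 1" using 3 by (simp_all add: Suc_leI fib_neq_0_nat)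
    have f: "fib (n+2) = fib (n+1) + fib n" by (simp add: numeral_eq_Suc)
    show ?thesis using assms(3)[OF 3] h1 h2 p1 f by simp
  qed
qed

definition avA :: "nat list \<Rightarrow> bool" where
  "avA s \<longleftrightarrow> \<not> C3 1 2 3 s \<and> \<not> C3 1 3 2 s \<and> \<not> C4 3 2 4 1 s"

definition spA :: "nat \<Rightarrow> nat list" where
  "spA n = (n-1) # rev [1..<n-1] @ [n]"

lemma AvA: "Av n [[1,2,3],[1,3,2],[3,2,4,1]] = {s \<in> perms n. avA s}"
  by (simp add: Av_def avoids_def contains3 contains4 avA_def)

lemma avA_tail: assumes "avA (x#xs)" shows "avA xs"
proof -
  have "\<not> C3 1 2 3 xs" using C3_tail[of 1 2 3 xs x] assms unfolding avA_def by blast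
  moreover have "\<not> C3 1 3 2 xs" using C3_tail[of 1 3 2 xs x] assms unfolding avA_def by blast
  moreover have "\<not> C4 3 2 4 1 xs" using C4_tail[of 3 2 4 1 xs x] assms unfolding avA_def by blast
  ultimately show ?thesis unfolding avA_def by blast
qed

lemma avA_drop: assumes "avA u" "\<forall>z\<in>set (tl u). z < x" shows "avA (x#u)"
proof -
  have n1: "\<not> C3 1 2 3 u" "\<not> C3 1 3 2 u" "\<not> C4 3 2 4 1 u" using assms(1) unfolding avA_def by simp_all
  have l: "(1::nat) < 3" "(1::nat) < 2" "(3::nat) < 4" by simp_all
  have "\<not> C3 1 2 3 (x#u)" using C3_drop[OF _ l(1) assms(2)] n1(1) by blast
  moreover have "\<not> C3 1 3 2 (x#u)" using C3_drop[OF _ l(2) assms(2)] n1(2) by blast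
  moreover have "\<not> C4 3 2 4 1 (x#u)" using C4_drop[OF _ l(3) assms(2)] n1(3) by blast
  ultimately show ?thesis unfolding avA_def by simp
qed

lemma lt_tl:
  fixes t :: "nat list"
  assumes "set t \<subseteq> {1..m}" "m < x"
  shows "\<forall>z\<in>set (tl t). z < x"
proof
  fix z assume "z \<in> set (tl t)"
  then have "z \<in> set t" by (rule set_tl_sub)
  then have "z \<le> m" using assms(1) by auto
  then show "z < x" using assms(2) by simp
qed

lemma A_back1:
  assumes "n \<ge> 1" "t \<in> perms (n-1)" "avA t"
  shows "n#t \<in> perms n" "avA (n#t)"
proof -
  show "n#t \<in> perms n" using perms_Cons_iff[OF assms(1)] assms(2) by simp
  have "set t \<subseteq> {1..n-1}" using assms(2) unfolding perms_def by simp
  moreover have "n - 1 < n" using assms(1) by simp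
  ultimately have "\<forall>z\<in>set (tl t). z < n" by (rule lt_tl)
  then show "avA (n#t)" by (rule avA_drop[OF assms(3)])
qed

lemma A_back2:
  assumes "n \<ge> 2" "t \<in> perms (n-2)" "avA t"
  shows "(n-1)#n#t \<in> perms n" "avA ((n-1)#n#t)"
proof -
  show "(n-1)#n#t \<in> perms n" using perms_Cons2_iff[OF assms(1)] assms(2) by simp
  have st: "set t \<subseteq> {1..n-2}" using assms(2) unfolding perms_def by simp
  have "n - 2 < n" using assms(1) by simp
  with st have "\<forall>z\<in>set (tl t). z < n" by (rule lt_tl)
  then have a1: "avA (n#t)" by (rule avA_drop[OF assms(3)])
  have "\<forall>z\<in>set t. z < n-1"
  proof
    fix z assume "z \<in> set t"
    then have "z \<le> n-2" using st by auto
    then show "z < n-1" using assms(1) by simp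
  qed
  then have "\<forall>z\<in>set (tl (n#t)). z < n-1" by simp
  then show "avA ((n-1)#n#t)" by (rule avA_drop[OF a1])
qed

lemma spA_len: "length (spA n) = n" if "n \<ge> 2"
  using that by (simp add: spA_def)

lemma spA_nth: assumes "n \<ge> 2" "p < n - 1" shows "spA n ! p = n - 1 - p"
proof (cases p)
  case 0 then show ?thesis by (simp add: spA_def)
next
  case (Suc p')
  have pl: "p' < length (rev [1..<n-1])" using assms Suc by simp
  have "spA n ! p = rev [1..<n-1] ! p'" using pl Suc by (simp add: spA_def nth_append del: length_rev length_upt)
  also have "\<dots> = [1..<n-1] ! (n - 2 - Suc p')" using assms Suc by (simp add: rev_nth)
  also have "\<dots> = 1 + (n - 2 - Suc p')" using assms Suc by (subst nth_upt) auto
  finally show ?thesis using assms Suc by simp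
qed

lemma A_sp:
  assumes "n \<ge> 3"
  shows "spA n \<in> perms n" "avA (spA n)"
proof -
  have "distinct (spA n)" using assms by (auto simp: spA_def)
  moreover have "set (spA n) = {1..n}" using assms by (auto simp: spA_def)
  ultimately show "spA n \<in> perms n" unfolding perms_def by auto
  have L: "length (spA n) = n" using assms spA_len by auto
  have D: "spA n ! j < spA n ! i" if "i < j" "j < n - 1" for i j
    using spA_nth[of n i] spA_nth[of n j] that assms by simp
  have "\<not> C3 1 2 3 (spA n)"
  proof
    assume "C3 1 2 3 (spA n)"
    then obtain i j k where "i<j" "j<k" "k<n" "(spA n ! i < spA n ! j) = ((1::nat) < 2)" unfolding C3_def L by blast
    then have "j < n - 1" "spA n ! i < spA n ! j" by simp_all
    then show False using D[of i j] \<open>i<j\<close> by simp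
  qed
  moreover have "\<not> C3 1 3 2 (spA n)"
  proof
    assume "C3 1 3 2 (spA n)"
    then obtain i j k where "i<j" "j<k" "k<n" "(spA n ! i < spA n ! j) = ((1::nat) < 3)" unfolding C3_def L by blast
    then have "j < n - 1" "spA n ! i < spA n ! j" by simp_all
    then show False using D[of i j] \<open>i<j\<close> by simp
  qed
  moreover have "\<not> C4 3 2 4 1 (spA n)"
  proof
    assume "C4 3 2 4 1 (spA n)"
    then obtain i j k l where "i<j" "j<k" "k<l" "l<n" "(spA n ! j < spA n ! k) = ((2::nat) < 4)" unfolding C4_def L by blast
    then have "k < n - 1" "spA n ! j < spA n ! k" by simp_all
    then show False using D[of j k] \<open>j<k\<close> by simp
  qed
  ultimately show "avA (spA n)" unfolding avA_def by blast
qed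


lemma distinct_nth_neq: "distinct (s::nat list) \<Longrightarrow> j < length s \<Longrightarrow> k < length s \<Longrightarrow> j \<noteq> k \<Longrightarrow> s!j \<noteq> s!k"
  by (simp add: nth_eq_iff_index_eq)

lemma L12:
  fixes s :: "nat list"
  assumes ds: "distinct s" and n1: "\<not> C3 1 2 3 s" and n2: "\<not> C3 1 3 2 s"
    and h: "i<j" "j<k" "k<length s" "s!i<s!j" "s!i<s!k"
  shows False
proof -
  have "s!j \<noteq> s!k" using distinct_nth_neq[OF ds, of j k] h by simp
  then consider "s!j < s!k" | "s!k < s!j" by linarith
  then show False
  proof cases
    case 1
    have "C3 1 2 3 s" unfolding C3_def
      by (rule exI[of _ i], rule exI[of _ j], rule exI[of _ k]) (use h 1 in simp)
    then show False using n1 by blast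
  next
    case 2
    have "C3 1 3 2 s" unfolding C3_def
      by (rule exI[of _ i], rule exI[of _ j], rule exI[of _ k]) (use h 2 in simp)
    then show False using n2 by blast
  qed
qed

lemma A_fwd:
  fixes s :: "nat list"
  assumes n3: "n \<ge> 3" and sp: "s \<in> perms n" and av: "avA s"
  shows "(\<exists>t. s = n#t \<and> t \<in> perms (n-1) \<and> avA t) \<or> (\<exists>t. s = (n-1)#n#t \<and> t \<in> perms (n-2) \<and> avA t) \<or> s = spA n"
proof -
  have ds: "distinct s" and ss: "set s = {1..n}" using sp unfolding perms_def by auto
  have ls: "length s = n" using sp by (rule perms_length)
  have nA: "\<not> C3 1 2 3 s" "\<not> C3 1 3 2 s" "\<not> C4 3 2 4 1 s" using av unfolding avA_def by auto
  note L1 = L12[OF ds nA(1) nA(2)]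
  obtain x xs where s: "s = x#xs" using ls n3 by (cases s) auto
  have xin: "x \<in> {1..n}" using ss s by auto
  have xnot: "x \<notin> set xs" using ds s by simp
  have xge: "x \<ge> n - 1"
  proof (rule ccontr)
    assume a: "\<not> x \<ge> n - 1"
    have "n - 1 \<in> set s" "n \<in> set s" using ss n3 by auto
    then have "n - 1 \<in> set xs" "n \<in> set xs" using a s by auto
    then obtain p q where p: "p < length xs" "xs!p = n - 1" and q: "q < length xs" "xs!q = n"
      by (metis in_set_conv_nth)
    have "p \<noteq> q" using p q n3 by auto
    then consider "p < q" | "q < p" by linarith
    then show False
    proof cases
      case 1
      show False by (rule L1[of 0 "Suc p" "Suc q"]) (use 1 p q a s in auto)
    next
      case 2
      show False by (rule L1[of 0 "Suc q" "Suc p"]) (use 2 p q a s in auto)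
    qed
  qed
  have x12: "x \<le> n" using xin by auto
  have disj: "x = n \<or> x = n - 1" using x12 xge by linarith
  consider "x = n" | "x = n - 1" using disj by blast
  then show ?thesis
  proof cases
    case 1
    have "xs \<in> perms (n-1)" using perms_Cons_iff[of n xs] sp s 1 n3 by simp
    moreover have "avA xs" using av s avA_tail by blast
    ultimately show ?thesis using s 1 by blast
  next
    case 2
    have "n \<in> set s" using ss n3 by auto
    moreover have "n \<noteq> n - 1" using n3 by simp
    ultimately have "n \<in> set xs" using s 2 by auto
    then obtain zs ws where xs: "xs = zs @ n # ws" by (metis split_list)
    show ?thesis
    proof (cases "zs = []")
      case True
      have "ws \<in> perms (n-2)" using perms_Cons2_iff[of n ws] sp s 2 n3 xs True by simp
      moreover have "avA (x # n # ws)" using av s xs True by simp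
      then have "avA ws" by (metis avA_tail)
      ultimately show ?thesis using s 2 xs True by blast
    next
      case False
      define m where "m = length zs"
      have m0: "m > 0" using False m_def by simp
      have dd: "n - 1 \<notin> set zs" "n - 1 \<notin> set ws" "n \<notin> set zs" "n \<notin> set ws" "distinct zs" "distinct ws" "set zs \<inter> set ws = {}"
        using ds s 2 xs by auto
      have sset: "insert (n-1) (set zs \<union> insert n (set ws)) = {1..n}" using ss s 2 xs by simp
      have zsub: "\<forall>z\<in>set zs. z < n - 1"
      proof
        fix z assume z: "z \<in> set zs"
        then have "z \<in> {1..n}" using sset by blast
        moreover have "z \<noteq> n-1" "z \<noteq> n" using z dd by auto
        ultimately show "z < n - 1" by auto
      qed
      have wsub: "\<forall>z\<in>set ws. z < n - 1"
      proof
        fix z assume z: "z \<in> set ws"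
        then have "z \<in> {1..n}" using sset by blast
        moreover have "z \<noteq> n-1" "z \<noteq> n" using z dd by auto
        ultimately show "z < n - 1" by auto
      qed
      have sz: "s ! Suc i = zs ! i" if "i < m" for i using that s xs m_def by (simp add: nth_append)
      have sn: "s ! Suc m = n" using s xs m_def by (simp add: nth_append)
      have s0: "s ! 0 = n - 1" using s 2 by simp
      have lsz: "length s = Suc (m + Suc (length ws))" using s xs m_def by simp
      have ws0: "ws = []"
      proof (rule ccontr)
        assume "ws \<noteq> []"
        then obtain w ws' where w: "ws = w # ws'" by (cases ws) auto
        have sw: "s ! Suc (Suc m) = w" using s xs m_def w by (simp add: nth_append)
        have s1: "s ! 1 = zs ! 0" using sz[of 0] m0 by simp
        have z0: "zs ! 0 \<in> set zs" using m0 m_def by simp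
        have "w \<in> set ws" using w by simp
        then have zw: "zs ! 0 \<noteq> w" "w < n - 1" "zs ! 0 < n - 1" using z0 dd(7) wsub zsub by auto
        then consider "zs ! 0 < w" | "w < zs ! 0" by linarith
        then show False
        proof cases
          case 1
          show False by (rule L1[of 1 "Suc m" "Suc (Suc m)"]) (use 1 m0 lsz s1 sn sw zw w in auto)
        next
          case 2
          have "C4 3 2 4 1 s" unfolding C4_def
            by (rule exI[of _ 0], rule exI[of _ 1], rule exI[of _ "Suc m"], rule exI[of _ "Suc (Suc m)"])
              (use 2 m0 lsz s0 s1 sn sw zw n3 w in auto)
          then show False using nA(3) by blast
        qed
      qed
      have dec: "zs ! j < zs ! i" if "i < j" "j < m" for i j
      proof (rule ccontr)
        assume "\<not> zs ! j < zs ! i"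
        moreover have "zs ! j \<noteq> zs ! i" using distinct_nth_neq[OF dd(5), of j i] that m_def by simp
        ultimately have "zs ! i < zs ! j" by linarith
        moreover have "zs ! i \<in> set zs" using that m_def by auto
        then have a1: "zs ! i < n" using zsub by fastforce
        ultimately show False
          by (intro L1[of "Suc i" "Suc j" "Suc m"]) (use that lsz sz[of i] sz[of j] sn a1 in auto)
      qed
      have "sorted_wrt (\<lambda>a b. b < a) zs"
        unfolding sorted_wrt_iff_nth_less using dec m_def by auto
      then have "sorted_wrt (<) (rev zs)" by (simp add: sorted_wrt_rev)
      then have srt: "sorted (rev zs)" "distinct (rev zs)" by (auto simp: strict_sorted_iff)
      have "set zs = {1..n} - {n-1, n}" using sset ws0 dd by auto
      also have "\<dots> = set [1..<n-1]" using n3 by auto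
      finally have "set (rev zs) = set [1..<n-1]" by simp
      then have "rev zs = [1..<n-1]" using sorted_distinct_set_unique[OF srt, of "[1..<n-1]"] by simp
      then have "zs = rev [1..<n-1]" by (metis rev_rev_ident)
      then show ?thesis using s xs 2 ws0 unfolding spA_def by simp
    qed
  qed
qed


lemma A_dec:
  assumes "n \<ge> 3"
  shows "{s \<in> perms n. avA s} = Cons n ` {t \<in> perms (n-1). avA t} \<union> (\<lambda>t. (n-1)#n#t) ` {t \<in> perms (n-2). avA t} \<union> {spA n}"
proof (intro equalityI subsetI)
  fix s assume "s \<in> {s \<in> perms n. avA s}"
  then have "s \<in> perms n" "avA s" by auto
  from A_fwd[OF assms this] show "s \<in> Cons n ` {t \<in> perms (n-1). avA t} \<union> (\<lambda>t. (n-1)#n#t) ` {t \<in> perms (n-2). avA t} \<union> {spA n}"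
    by blast
next
  fix s assume "s \<in> Cons n ` {t \<in> perms (n-1). avA t} \<union> (\<lambda>t. (n-1)#n#t) ` {t \<in> perms (n-2). avA t} \<union> {spA n}"
  then consider t where "s = n#t" "t \<in> perms (n-1)" "avA t" | t where "s = (n-1)#n#t" "t \<in> perms (n-2)" "avA t" | "s = spA n"
    by blast
  then show "s \<in> {s \<in> perms n. avA s}"
  proof cases
    case 1 then show ?thesis using A_back1[of n t] assms by simp
  next
    case 2 then show ?thesis using A_back2[of n t] assms by simp
  next
    case 3 then show ?thesis using A_sp[OF assms] by simp
  qed
qed

lemma avA_short: "length s < 3 \<Longrightarrow> avA s"
  unfolding avA_def using C3_short C4_short by blast

lemma cardA: "n \<ge> 1 \<Longrightarrow> card {s \<in> perms n. avA s} = fib (n+2) - 1"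
proof (rule fib_rec[of "\<lambda>n. card {s \<in> perms n. avA s}"])
  have "{s \<in> perms 1. avA s} = {[1]}" using perms1 avA_short[of "[1]"] by auto
  then show "card {s \<in> perms 1. avA s} = 1" by simp
next
  have "{s \<in> perms 2. avA s} = {[1,2],[2,1]}" using perms2 avA_short[of "[1,2]"] avA_short[of "[2,1]"] by auto
  then show "card {s \<in> perms 2. avA s} = 2" by simp
next
  fix m :: nat assume m: "m \<ge> 3"
  have f1: "finite {t \<in> perms (m-1). avA t}" using finite_perms by simp
  have f2: "finite {t \<in> perms (m-2). avA t}" using finite_perms by simp
  have h: "hd (spA m) \<noteq> m" using m by (simp add: spA_def)
  have s1: "spA m ! 1 = m - 2" using spA_nth[of m 1] m by simp
  have h2: "spA m \<notin> (\<lambda>t. (m-1)#m#t) ` {t \<in> perms (m-2). avA t}"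
  proof
    assume "spA m \<in> (\<lambda>t. (m-1)#m#t) ` {t \<in> perms (m-2). avA t}"
    then obtain t where "spA m = (m-1)#m#t" by blast
    then have "spA m ! 1 = m" by simp
    then show False using s1 m by simp
  qed
  show "card {s \<in> perms m. avA s} = card {s \<in> perms (m-1). avA s} + card {s \<in> perms (m-2). avA s} + 1"
    unfolding A_dec[OF m] using card_decomp[OF f1 f2 _ h h2] m by simp
qed


definition avB :: "nat list \<Rightarrow> bool" where
  "avB s \<longleftrightarrow> \<not> C3 1 3 2 s \<and> \<not> C3 2 1 3 s \<and> \<not> C4 2 3 4 1 s"

definition spB :: "nat \<Rightarrow> nat list" where
  "spB n = [1..<n+1]"

lemma AvB: "Av n [[1,3,2],[2,1,3],[2,3,4,1]] = {s \<in> perms n. avB s}"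
  by (simp add: Av_def avoids_def contains3 contains4 avB_def)

lemma avB_tail: assumes "avB (x#xs)" shows "avB xs"
proof -
  have "\<not> C3 1 3 2 xs" using C3_tail[of 1 3 2 xs x] assms unfolding avB_def by blast
  moreover have "\<not> C3 2 1 3 xs" using C3_tail[of 2 1 3 xs x] assms unfolding avB_def by blast
  moreover have "\<not> C4 2 3 4 1 xs" using C4_tail[of 2 3 4 1 xs x] assms unfolding avB_def by blast
  ultimately show ?thesis unfolding avB_def by blast
qed

lemma avB_drop: assumes "avB u" "\<forall>z\<in>set (tl u). z < x" shows "avB (x#u)"
proof -
  have n1: "\<not> C3 1 3 2 u" "\<not> C3 2 1 3 u" "\<not> C4 2 3 4 1 u" using assms(1) unfolding avB_def by simp_all
  have l: "(1::nat) < 2" "(2::nat) < 3" "(2::nat) < 4" by simp_all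
  have "\<not> C3 1 3 2 (x#u)" using C3_drop[OF _ l(1) assms(2)] n1(1) by blast
  moreover have "\<not> C3 2 1 3 (x#u)" using C3_drop[OF _ l(2) assms(2)] n1(2) by blast
  moreover have "\<not> C4 2 3 4 1 (x#u)" using C4_drop[OF _ l(3) assms(2)] n1(3) by blast
  ultimately show ?thesis unfolding avB_def by simp
qed

lemma B_back1:
  assumes "n \<ge> 1" "t \<in> perms (n-1)" "avB t"
  shows "n#t \<in> perms n" "avB (n#t)"
proof -
  show "n#t \<in> perms n" using perms_Cons_iff[OF assms(1)] assms(2) by simp
  have "set t \<subseteq> {1..n-1}" using assms(2) unfolding perms_def by simp
  moreover have "n - 1 < n" using assms(1) by simp
  ultimately have "\<forall>z\<in>set (tl t). z < n" by (rule lt_tl)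
  then show "avB (n#t)" by (rule avB_drop[OF assms(3)])
qed

lemma B_back2:
  assumes "n \<ge> 2" "t \<in> perms (n-2)" "avB t"
  shows "(n-1)#n#t \<in> perms n" "avB ((n-1)#n#t)"
proof -
  show "(n-1)#n#t \<in> perms n" using perms_Cons2_iff[OF assms(1)] assms(2) by simp
  have st: "set t \<subseteq> {1..n-2}" using assms(2) unfolding perms_def by simp
  have "n - 2 < n" using assms(1) by simp
  with st have "\<forall>z\<in>set (tl t). z < n" by (rule lt_tl)
  then have a1: "avB (n#t)" by (rule avB_drop[OF assms(3)])
  have "\<forall>z\<in>set t. z < n-1"
  proof
    fix z assume "z \<in> set t"
    then have "z \<le> n-2" using st by auto
    then show "z < n-1" using assms(1) by simp
  qed
  then have "\<forall>z\<in>set (tl (n#t)). z < n-1" by simp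
  then show "avB ((n-1)#n#t)" by (rule avB_drop[OF a1])
qed

lemma B_sp:
  assumes "n \<ge> 3"
  shows "spB n \<in> perms n" "avB (spB n)"
proof -
  have "distinct (spB n)" by (simp add: spB_def)
  moreover have "set (spB n) = {1..n}" by (auto simp: spB_def)
  ultimately show "spB n \<in> perms n" unfolding perms_def by auto
  have L: "length (spB n) = n" by (simp add: spB_def)
  have N: "spB n ! i = 1 + i" if "i < n" for i
    unfolding spB_def using that by (subst nth_upt) auto
  have D: "spB n ! i < spB n ! j" if "i < j" "j < n" for i j
    using that N[of i] N[of j] by simp
  have "\<not> C3 1 3 2 (spB n)"
  proof
    assume "C3 1 3 2 (spB n)"
    then obtain i j k where "j<k" "k<n" "(spB n ! j < spB n ! k) = ((3::nat) < 2)" unfolding C3_def L by blast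
    then show False using D[of j k] by simp
  qed
  moreover have "\<not> C3 2 1 3 (spB n)"
  proof
    assume "C3 2 1 3 (spB n)"
    then obtain i j k where "i<j" "j<k" "k<n" "(spB n ! i < spB n ! j) = ((2::nat) < 1)" unfolding C3_def L by blast
    then show False using D[of i j] by simp
  qed
  moreover have "\<not> C4 2 3 4 1 (spB n)"
  proof
    assume "C4 2 3 4 1 (spB n)"
    then obtain i j k l where "k<l" "l<n" "(spB n ! k < spB n ! l) = ((4::nat) < 1)" unfolding C4_def L by blast
    then show False using D[of k l] by simp
  qed
  ultimately show "avB (spB n)" unfolding avB_def by blast
qed


lemma B_fwd:
  fixes s :: "nat list"
  assumes n3: "n \<ge> 3" and sp: "s \<in> perms n" and av: "avB s"
  shows "(\<exists>t. s = n#t \<and> t \<in> perms (n-1) \<and> avB t) \<or> (\<exists>t. s = (n-1)#n#t \<and> t \<in> perms (n-2) \<and> avB t) \<or> s = spB n"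
proof -
  have ds: "distinct s" and ss: "set s = {1..n}" using sp unfolding perms_def by auto
  have ls: "length s = n" using sp by (rule perms_length)
  have nB: "\<not> C3 1 3 2 s" "\<not> C3 2 1 3 s" "\<not> C4 2 3 4 1 s" using av unfolding avB_def by auto
  obtain x xs where s: "s = x#xs" using ls n3 by (cases s) auto
  have xin: "x \<in> {1..n}" using ss s by auto
  have xnot: "x \<notin> set xs" using ds s by simp
  have dxs: "distinct xs" using ds s by simp
  have sxs: "set xs = {1..n} - {x}" using ss s xnot by auto
  have x12: "1 \<le> x" "x \<le> n" using xin by auto
  have disj: "x = n \<or> x = n - 1 \<or> x = 1 \<or> (2 \<le> x \<and> x \<le> n - 2)" using x12 by linarith
  consider "x = n" | "x = n - 1" | "x = 1" | "2 \<le> x" "x \<le> n - 2" using disj by blast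
  then show ?thesis
  proof cases
    case 1
    have "xs \<in> perms (n-1)" using perms_Cons_iff[of n xs] sp s 1 n3 by simp
    moreover have "avB xs" using av s avB_tail by blast
    ultimately show ?thesis using s 1 by blast
  next
    case 2
    have "n \<in> set xs" using sxs 2 n3 by auto
    then obtain zs ws where xs: "xs = zs @ n # ws" by (metis split_list)
    show ?thesis
    proof (cases "zs = []")
      case True
      have "ws \<in> perms (n-2)" using perms_Cons2_iff[of n ws] sp s 2 n3 xs True by simp
      moreover have "avB (x # n # ws)" using av s xs True by simp
      then have "avB ws" by (metis avB_tail)
      ultimately show ?thesis using s 2 xs True by blast
    next
      case False
      define m where "m = length zs"
      have m0: "m > 0" using False m_def by simp
      have z0: "zs ! 0 \<in> set zs" using m0 m_def by simp
      have "n \<notin> set zs" using dxs xs by simp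
      then have zn: "zs ! 0 \<noteq> n" using z0 by metis
      have "zs ! 0 \<in> set xs" using z0 xs by simp
      then have zz: "zs ! 0 \<in> {1..n}" "zs ! 0 \<noteq> n - 1" using sxs 2 by simp_all
      have "zs ! 0 \<le> n" using zz(1) by simp
      then have zl: "zs ! 0 < n - 1" using zn zz(2) by linarith
      have s1: "s ! 1 = zs ! 0" using s xs m0 m_def by (simp add: nth_append)
      have sn: "s ! Suc m = n" using s xs m_def by (simp add: nth_append)
      have s0: "s ! 0 = n - 1" using s 2 by simp
      have lsz: "length s = Suc (m + Suc (length ws))" using s xs m_def by simp
      have "C3 2 1 3 s" unfolding C3_def
        by (rule exI[of _ 0], rule exI[of _ 1], rule exI[of _ "Suc m"])
          (use m0 lsz s0 s1 sn zl n3 in auto)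
      then show ?thesis using nB(2) by blast
    qed
  next
    case 3
    have inc: "xs ! i < xs ! j" if "i < j" "j < length xs" for i j
    proof (rule ccontr)
      assume a: "\<not> xs ! i < xs ! j"
      moreover have "xs ! j \<noteq> xs ! i" using distinct_nth_neq[OF dxs, of j i] that by simp
      ultimately have lt: "xs ! j < xs ! i" by linarith
      have "xs ! i \<in> set xs" "xs ! j \<in> set xs" using that by auto
      then have g: "1 < xs ! i" "1 < xs ! j" using sxs 3 by auto
      have "C3 1 3 2 s" unfolding C3_def
        by (rule exI[of _ 0], rule exI[of _ "Suc i"], rule exI[of _ "Suc j"])
          (use that lt g s 3 in auto)
      then show False using nB(1) by blast
    qed
    have "sorted_wrt (<) xs" unfolding sorted_wrt_iff_nth_less using inc by auto
    then have srt: "sorted xs" "distinct xs" by (auto simp: strict_sorted_iff)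
    have e1: "{1..n} - {1::nat} = {2..<n+1}" by auto
    have "set xs = {2..<n+1}" using sxs 3 e1 by simp
    then have "set xs = set [2..<n+1]" by (simp only: set_upt)
    then have xe: "xs = [2..<n+1]" using sorted_distinct_set_unique[OF srt sorted_upt distinct_upt] by blast
    have e2': "[1..<n+1] = 1 # [Suc 1..<n+1]" by (rule upt_conv_Cons) (use n3 in simp)
    have e2: "[1..<n+1] = 1 # [2..<n+1]" using e2' by (simp only: Suc_1)
    have "s = [1..<n+1]" unfolding e2 s 3 xe by (rule refl)
    then have "s = spB n" unfolding spB_def .
    then show ?thesis by blast
  next
    case 4
    have i1: "1 \<in> set xs" unfolding sxs using 4 n3 by simp
    have i2: "n - 1 \<in> set xs" unfolding sxs using 4 n3 by (simp, linarith)
    have i3: "n \<in> set xs" unfolding sxs using 4 n3 by simp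
    obtain p where p: "p < length xs" "xs!p = 1" using i1 unfolding in_set_conv_nth by blast
    obtain a where a: "a < length xs" "xs!a = n - 1" using i2 unfolding in_set_conv_nth by blast
    obtain b where b: "b < length xs" "xs!b = n" using i3 unfolding in_set_conv_nth by blast
    have ls': "length s = Suc (length xs)" using s by simp
    have s0: "s ! 0 = x" using s by simp
    have sp': "s ! Suc p = 1" using s p by simp
    have sa: "s ! Suc a = n - 1" using s a by simp
    have sb: "s ! Suc b = n" using s b by simp
    have x1: "1 < x" "x < n - 1" "x < n" "n - 1 < n" "1 < n - 1" "1 < n" using 4 n3 by linarith+
    have "a \<noteq> b" using a(2) b(2) n3 by auto
    have "p \<noteq> b" using p(2) b(2) n3 by auto
    show ?thesis
    proof (cases "b < a")
      case True
      have "C3 1 3 2 s" unfolding C3_def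
        by (rule exI[of _ 0], rule exI[of _ "Suc b"], rule exI[of _ "Suc a"])
          (use True a(1) ls' s0 sa sb x1 in simp)
      then show ?thesis using nB(1) by blast
    next
      case False
      then have ab: "a < b" using \<open>a \<noteq> b\<close> by linarith
      show ?thesis
      proof (cases "p < b")
        case True
        have "C3 2 1 3 s" unfolding C3_def
          by (rule exI[of _ 0], rule exI[of _ "Suc p"], rule exI[of _ "Suc b"])
            (use True b(1) ls' s0 sp' sb x1 in simp)
        then show ?thesis using nB(2) by blast
      next
        case False
        then have bp: "b < p" using \<open>p \<noteq> b\<close> by linarith
        have "C4 2 3 4 1 s" unfolding C4_def
          by (rule exI[of _ 0], rule exI[of _ "Suc a"], rule exI[of _ "Suc b"], rule exI[of _ "Suc p"])
            (use ab bp p(1) ls' s0 sp' sa sb x1 in simp)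
        then show ?thesis using nB(3) by blast
      qed
    qed
  qed
qed

lemma B_dec:
  assumes "n \<ge> 3"
  shows "{s \<in> perms n. avB s} = Cons n ` {t \<in> perms (n-1). avB t} \<union> (\<lambda>t. (n-1)#n#t) ` {t \<in> perms (n-2). avB t} \<union> {spB n}"
proof (intro equalityI subsetI)
  fix s assume "s \<in> {s \<in> perms n. avB s}"
  then have "s \<in> perms n" "avB s" by auto
  from B_fwd[OF assms this] show "s \<in> Cons n ` {t \<in> perms (n-1). avB t} \<union> (\<lambda>t. (n-1)#n#t) ` {t \<in> perms (n-2). avB t} \<union> {spB n}"
    by blast
next
  fix s assume "s \<in> Cons n ` {t \<in> perms (n-1). avB t} \<union> (\<lambda>t. (n-1)#n#t) ` {t \<in> perms (n-2). avB t} \<union> {spB n}"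
  then consider t where "s = n#t" "t \<in> perms (n-1)" "avB t" | t where "s = (n-1)#n#t" "t \<in> perms (n-2)" "avB t" | "s = spB n"
    by blast
  then show "s \<in> {s \<in> perms n. avB s}"
  proof cases
    case 1 then show ?thesis using B_back1[of n t] assms by simp
  next
    case 2 then show ?thesis using B_back2[of n t] assms by simp
  next
    case 3 then show ?thesis using B_sp[OF assms] by simp
  qed
qed

lemma avB_short: "length s < 3 \<Longrightarrow> avB s"
  unfolding avB_def using C3_short C4_short by blast

lemma cardB: "n \<ge> 1 \<Longrightarrow> card {s \<in> perms n. avB s} = fib (n+2) - 1"
proof (rule fib_rec[of "\<lambda>n. card {s \<in> perms n. avB s}"])
  have "{s \<in> perms 1. avB s} = {[1]}" using perms1 avB_short[of "[1]"] by auto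
  then show "card {s \<in> perms 1. avB s} = 1" by simp
next
  have "{s \<in> perms 2. avB s} = {[1,2],[2,1]}" using perms2 avB_short[of "[1,2]"] avB_short[of "[2,1]"] by auto
  then show "card {s \<in> perms 2. avB s} = 2" by simp
next
  fix m :: nat assume m: "m \<ge> 3"
  have f1: "finite {t \<in> perms (m-1). avB t}" using finite_perms by simp
  have f2: "finite {t \<in> perms (m-2). avB t}" using finite_perms by simp
  have hh: "hd (spB m) = 1" using m by (simp add: spB_def upt_conv_Cons)
  then have h: "hd (spB m) \<noteq> m" using m by simp
  have h2: "spB m \<notin> (\<lambda>t. (m-1)#m#t) ` {t \<in> perms (m-2). avB t}"
  proof
    assume "spB m \<in> (\<lambda>t. (m-1)#m#t) ` {t \<in> perms (m-2). avB t}"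
    then obtain t where "spB m = (m-1)#m#t" by blast
    then have "hd (spB m) = m - 1" by simp
    then show False using hh m by simp
  qed
  show "card {s \<in> perms m. avB s} = card {s \<in> perms (m-1). avB s} + card {s \<in> perms (m-2). avB s} + 1"
    unfolding B_dec[OF m] using card_decomp[OF f1 f2 _ h h2] m by simp
qed

theorem theorem3p4:
  fixes n :: nat
  assumes "n \<ge> 1"
  shows "card (Av n [[1,2,3],[1,3,2],[3,2,4,1]]) = fib (n + 2) - 1
       \<and> card (Av n [[1,3,2],[2,1,3],[2,3,4,1]]) = fib (n + 2) - 1"
  unfolding AvA AvB using cardA[OF assms] cardB[OF assms] by simp

end
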